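(* Let $q(\mathbf{x}_0)$ be a probability density on $\mathbb{R}^d$ with finite second moments, let $\overline{\alpha}_n\in(0,1)$, $\overline{\beta}_n=1-\overline{\alpha}_n$, and let $q(\mathbf{x}_n|\mathbf{x}_0)=\mathcal{N}(\mathbf{x}_n|\sqrt{\overline{\alpha}_n}\mathbf{x}_0,\overline{\beta}_n\mathbf{I})$, with $q_n$ the marginal density of $\mathbf{x}_n$. Then $$\mathbb{E}_{q_n(\mathbf{x}_n)}\mathrm{Cov}_{q(\mathbf{x}_0|\mathbf{x}_n)}[\mathbf{x}_0]=\frac{\overline{\beta}_n}{\overline{\alpha}_n}\Big(\mathbf{I}-\overline{\beta}_n\,\mathbb{E}_{q_n(\mathbf{x}_n)}\big[\nabla_{\mathbf{x}_n}\log q_n(\mathbf{x}_n)\nabla_{\mathbf{x}_n}\log q_n(\mathbf{x}_n)^\top\big]\Big),$$ and $$\mathrm{Cov}_{q(\mathbf{x}_0)}[\mathbf{x}_0]=\mathbb{E}_{q_n(\mathbf{x}_n)}\mathrm{Cov}_{q(\mathbf{x}_0|\mathbf{x}_n)}[\mathbf{x}_0]+\mathrm{Cov}_{q_n(\mathbf{x}_n)}\mathbb{E}_{q(\mathbf{x}_0|\mathbf{x}_n)}[\mathbf{x}_0].$$ *)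

theory Defs
  imports "HOL-Analysis.Analysis"
begin

text \<open>Vectors in R^d are modelled as real^'n with d = CARD('n).
  All densities are with respect to Lebesgue measure lborel.\<close>

definition gauss_iso :: "real^'n \<Rightarrow> real^'n \<Rightarrow> real \<Rightarrow> real" where
  "gauss_iso x m s =
     (2 * pi * s) powr (- real CARD('n) / 2) * exp (- (norm (x - m))\<^sup>2 / (2 * s))"

definition fwd_kernel :: "real \<Rightarrow> real^'n \<Rightarrow> real^'n \<Rightarrow> real" where
  "fwd_kernel a xn x0 = gauss_iso xn (sqrt a *\<^sub>R x0) (1 - a)"

definition marg :: "(real^'n \<Rightarrow> real) \<Rightarrow> real \<Rightarrow> real^'n \<Rightarrow> real" where
  "marg q0 a xn = (\<integral>x0. q0 x0 * fwd_kernel a xn x0 \<partial>lborel)"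

definition post :: "(real^'n \<Rightarrow> real) \<Rightarrow> real \<Rightarrow> real^'n \<Rightarrow> real^'n \<Rightarrow> real" where
  "post q0 a xn x0 = q0 x0 * fwd_kernel a xn x0 / marg q0 a xn"

definition dmean :: "(real^'n \<Rightarrow> real) \<Rightarrow> real^'n" where
  "dmean p = (\<integral>x. p x *\<^sub>R x \<partial>lborel)"

definition dcov :: "(real^'n \<Rightarrow> real) \<Rightarrow> 'n \<Rightarrow> 'n \<Rightarrow> real" where
  "dcov p i j = (\<integral>x. p x * ((x $ i - dmean p $ i) * (x $ j - dmean p $ j)) \<partial>lborel)"

definition dexp :: "(real^'n \<Rightarrow> real) \<Rightarrow> (real^'n \<Rightarrow> real) \<Rightarrow> real" where
  "dexp p f = (\<integral>x. p x * f x \<partial>lborel)"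

definition dexpv :: "(real^'n \<Rightarrow> real) \<Rightarrow> (real^'n \<Rightarrow> real^'m) \<Rightarrow> real^'m" where
  "dexpv p f = (\<integral>x. p x *\<^sub>R f x \<partial>lborel)"

definition dcov_fun :: "(real^'n \<Rightarrow> real) \<Rightarrow> (real^'n \<Rightarrow> real^'m) \<Rightarrow> 'm \<Rightarrow> 'm \<Rightarrow> real" where
  "dcov_fun p f i j =
     (\<integral>x. p x * ((f x $ i - dexpv p f $ i) * (f x $ j - dexpv p f $ j)) \<partial>lborel)"

definition grad :: "(real^'n \<Rightarrow> real) \<Rightarrow> real^'n \<Rightarrow> real^'n" where
  "grad f x = (\<chi> i. frechet_derivative f (at x) (axis i 1))"

definition score :: "(real^'n \<Rightarrow> real) \<Rightarrow> real \<Rightarrow> real^'n \<Rightarrow> real^'n" where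
  "score q0 a = grad (\<lambda>x. ln (marg q0 a x))"

definition prob_density_2 :: "(real^'n \<Rightarrow> real) \<Rightarrow> bool" where
  "prob_density_2 q0 \<longleftrightarrow>
     q0 \<in> borel_measurable lborel \<and> (\<forall>x. 0 \<le> q0 x) \<and>
     integrable lborel q0 \<and> (\<integral>x. q0 x \<partial>lborel) = 1 \<and>
     integrable lborel (\<lambda>x. q0 x * (norm x)\<^sup>2)"

end

theory Submission imports Defs "HOL-Probability.Probability" begin

lemma gauss_prod:
  fixes z m :: "real^'n"
  assumes s: "0 < s"
  shows "gauss_iso z m s = (\<Prod>b\<in>Basis. normal_density (m \<bullet> b) (sqrt s) (z \<bullet> b))"
proof -
  have n: "(norm (z - m))\<^sup>2 = (\<Sum>b\<in>Basis. (z \<bullet> b - m \<bullet> b)\<^sup>2)"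
    unfolding power2_norm_eq_inner euclidean_inner[of "z-m" "z-m"]
    by (simp add: inner_diff_left power2_eq_square)
  have c: "card (Basis :: (real^'n) set) = CARD('n)" by simp
  have "(2 * pi * s) powr (- real CARD('n) / 2) = (\<Prod>b\<in>(Basis :: (real^'n) set). 1 / sqrt (2 * pi * s))"
  proof -
    have "(2 * pi * s) powr (- real CARD('n) / 2) = ((2 * pi * s) powr (-1/2)) ^ CARD('n)"
      using s by (simp add: powr_realpow[symmetric] powr_powr)
    also have "(2 * pi * s) powr (-1/2) = 1 / sqrt (2 * pi * s)"
      using s by (simp add: powr_minus_divide powr_half_sqrt)
    finally show ?thesis by (simp add: c)
  qed
  moreover have "exp (- (norm (z - m))\<^sup>2 / (2 * s)) = (\<Prod>b\<in>(Basis :: (real^'n) set). exp (- (z \<bullet> b - m \<bullet> b)\<^sup>2 / (2 * s)))"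
    by (simp add: n exp_sum[symmetric] sum_divide_distrib[symmetric] sum_negf)
  moreover have "(\<Prod>b\<in>Basis. normal_density (m \<bullet> b) (sqrt s) (z \<bullet> b)) =
     (\<Prod>b\<in>(Basis :: (real^'n) set). 1 / sqrt (2 * pi * s)) * (\<Prod>b\<in>(Basis :: (real^'n) set). exp (- (z \<bullet> b - m \<bullet> b)\<^sup>2 / (2 * s)))"
    unfolding prod.distrib[symmetric] normal_density_def using s by simp
  ultimately show ?thesis
    by (simp add: gauss_iso_def)
qed

lemma lborel_prod_integral:
  fixes f :: "'a::euclidean_space \<Rightarrow> real \<Rightarrow> real"
  assumes int: "\<And>b. b \<in> Basis \<Longrightarrow> integrable lborel (f b)"
  shows "integrable lborel (\<lambda>x::'a. \<Prod>b\<in>Basis. f b (x \<bullet> b))"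
    and "(\<integral>x. (\<Prod>b\<in>Basis. f b (x \<bullet> b)) \<partial>(lborel::'a measure)) = (\<Prod>b\<in>Basis. integral\<^sup>L lborel (f b))"
proof -
  interpret P: product_sigma_finite "\<lambda>_::'a. lborel :: real measure"
    by standard
  have meas[measurable]: "\<And>b. b \<in> Basis \<Longrightarrow> f b \<in> borel_measurable borel"
    using borel_measurable_integrable[OF int] by simp
  have mg: "(\<lambda>x::'a. \<Prod>b\<in>Basis. f b (x \<bullet> b)) \<in> borel_measurable borel"
    by measurable
  have gm: "(\<lambda>g. \<Sum>b\<in>Basis. g b *\<^sub>R b) \<in> measurable (\<Pi>\<^sub>M b\<in>(Basis::'a set). (lborel::real measure)) borel"
    by measurable
  have eq: "\<And>g. (\<Prod>b\<in>Basis. f b ((\<Sum>c\<in>Basis. g c *\<^sub>R c) \<bullet> b)) = (\<Prod>b\<in>(Basis::'a set). f b (g b))"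
    by (intro prod.cong refl) (simp add: inner_sum_left inner_Basis if_distrib sum.delta cong: if_cong)
  have i2: "integrable (\<Pi>\<^sub>M b\<in>(Basis::'a set). (lborel::real measure)) (\<lambda>g. \<Prod>b\<in>Basis. f b (g b))"
    by (rule P.product_integrable_prod) (auto intro: int)
  show "integrable lborel (\<lambda>x::'a. \<Prod>b\<in>Basis. f b (x \<bullet> b))"
    apply (subst lborel_eq[where 'a='a])
    apply (subst integrable_distr_eq[OF gm mg])
    using i2 by (simp add: eq)
  show "(\<integral>x. (\<Prod>b\<in>Basis. f b (x \<bullet> b)) \<partial>(lborel::'a measure)) = (\<Prod>b\<in>Basis. integral\<^sup>L lborel (f b))"
    apply (subst lborel_eq[where 'a='a])
    apply (subst integral_distr[OF gm mg])
    apply (simp add: eq)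
    by (rule P.product_integral_prod) (auto intro: int)
qed

lemma gauss_prod_int:
  fixes m :: "real^'n"
  assumes s: "0 < s"
    and int: "\<And>b. b \<in> Basis \<Longrightarrow> integrable lborel (\<lambda>t. normal_density (m \<bullet> b) (sqrt s) t * g b t)"
  shows "integrable lborel (\<lambda>z. gauss_iso z m s * (\<Prod>b\<in>Basis. g b (z \<bullet> b)))"
    and "(\<integral>z. gauss_iso z m s * (\<Prod>b\<in>Basis. g b (z \<bullet> b)) \<partial>lborel)
         = (\<Prod>b\<in>Basis. \<integral>t. normal_density (m \<bullet> b) (sqrt s) t * g b t \<partial>lborel)"
proof -
  have eq: "(\<lambda>z. gauss_iso z m s * (\<Prod>b\<in>Basis. g b (z \<bullet> b)))
     = (\<lambda>z. \<Prod>b\<in>Basis. (\<lambda>t. normal_density (m \<bullet> b) (sqrt s) t * g b t) (z \<bullet> b))"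
    by (simp add: gauss_prod[OF s] prod.distrib)
  show "integrable lborel (\<lambda>z. gauss_iso z m s * (\<Prod>b\<in>Basis. g b (z \<bullet> b)))"
    unfolding eq by (rule lborel_prod_integral(1)) (rule int)
  show "(\<integral>z. gauss_iso z m s * (\<Prod>b\<in>Basis. g b (z \<bullet> b)) \<partial>lborel)
         = (\<Prod>b\<in>Basis. \<integral>t. normal_density (m \<bullet> b) (sqrt s) t * g b t \<partial>lborel)"
    unfolding eq by (rule lborel_prod_integral(2)) (rule int)
qed

lemma nd_xx:
  assumes "0 < \<sigma>"
  shows "integrable lborel (\<lambda>t. normal_density \<mu> \<sigma> t * (t * t))"
    and "(\<integral>t. normal_density \<mu> \<sigma> t * (t * t) \<partial>lborel) = \<sigma>\<^sup>2 + \<mu>\<^sup>2"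
proof -
  have e: "\<And>t. normal_density \<mu> \<sigma> t * (t * t) = normal_density \<mu> \<sigma> t * (t - \<mu>)^(2*1)
      + 2 * \<mu> * (normal_density \<mu> \<sigma> t * t) - \<mu>\<^sup>2 * normal_density \<mu> \<sigma> t"
    by (simp add: algebra_simps power2_eq_square)
  have i1: "integrable lborel (\<lambda>t. normal_density \<mu> \<sigma> t * (t - \<mu>)^(2*1))"
    using integrable_normal_moment[OF assms] by blast
  have i2: "integrable lborel (\<lambda>t. normal_density \<mu> \<sigma> t * t)"
    using integrable_normal_moment_nz_1[OF assms] .
  have v1: "(\<integral>t. normal_density \<mu> \<sigma> t * (t - \<mu>)^(2*1) \<partial>lborel) = \<sigma>\<^sup>2"
    using integral_normal_moment_even[OF assms, of \<mu> 1] assms by (simp add: power2_eq_square)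
  show "integrable lborel (\<lambda>t. normal_density \<mu> \<sigma> t * (t * t))"
    unfolding e using i1 i2 integrable_normal_density[OF assms]
    by (intro Bochner_Integration.integrable_diff Bochner_Integration.integrable_add integrable_mult_right) auto
  show "(\<integral>t. normal_density \<mu> \<sigma> t * (t * t) \<partial>lborel) = \<sigma>\<^sup>2 + \<mu>\<^sup>2"
    unfolding e using i1 i2 v1 integral_normal_moment_nz_1[OF assms, of \<mu>] integrable_normal_density[OF assms]
      integral_normal_density[OF assms]
    by (simp add: power2_eq_square)
qed

lemma axis_Basis1: "axis i (1::real) \<in> Basis"
  by simp

lemma gauss_m0:
  fixes m :: "real^'n" assumes s: "0 < s"
  shows "integrable lborel (\<lambda>z. gauss_iso z m s)" and "(\<integral>z. gauss_iso z m s \<partial>lborel) = 1"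
proof -
  have si: "0 < sqrt s" using s by simp
  note G = gauss_prod_int[OF s, of m "\<lambda>b t. 1"]
  show "integrable lborel (\<lambda>z. gauss_iso z m s)"
    using G(1) integrable_normal_density[OF si] by simp
  show "(\<integral>z. gauss_iso z m s \<partial>lborel) = 1"
    using G(2) integrable_normal_density[OF si] integral_normal_density[OF si] by simp
qed

lemma gauss_m1:
  fixes m :: "real^'n" assumes s: "0 < s"
  shows "integrable lborel (\<lambda>z. gauss_iso z m s * z$i)" and "(\<integral>z. gauss_iso z m s * z$i \<partial>lborel) = m$i"
proof -
  have si: "0 < sqrt s" using s by simp
  define g where "g = (\<lambda>(b::real^'n) t::real. if b = axis i 1 then t else 1)"
  have pg: "\<And>z::real^'n. (\<Prod>b\<in>Basis. g b (z \<bullet> b)) = z$i"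
    unfolding g_def by (simp add: prod.delta cart_eq_inner_axis)
  have ig: "\<And>b. integrable lborel (\<lambda>t. normal_density (m \<bullet> b) (sqrt s) t * g b t)"
    unfolding g_def using integrable_normal_density[OF si] integrable_normal_moment_nz_1[OF si]
    by (case_tac "b = axis i 1") auto
  have vg: "\<And>b. (\<integral>t. normal_density (m \<bullet> b) (sqrt s) t * g b t \<partial>lborel) = (if b = axis i 1 then m \<bullet> b else 1)"
    unfolding g_def using integral_normal_density[OF si] integral_normal_moment_nz_1[OF si] by auto
  note G = gauss_prod_int[OF s, of m g, OF ig]
  show "integrable lborel (\<lambda>z. gauss_iso z m s * z$i)"
    using G(1) by (simp add: pg)
  show "(\<integral>z. gauss_iso z m s * z$i \<partial>lborel) = m$i"
    using G(2) by (simp add: pg vg prod.delta cart_eq_inner_axis)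
qed

lemma gauss_m2:
  fixes m :: "real^'n" assumes s: "0 < s"
  shows "integrable lborel (\<lambda>z. gauss_iso z m s * (z$i * z$j))"
    and "(\<integral>z. gauss_iso z m s * (z$i * z$j) \<partial>lborel) = m$i * m$j + (if i = j then s else 0)"
proof -
  have si: "0 < sqrt s" using s by simp
  define g where "g = (\<lambda>(b::real^'n) t::real. (if b = axis i 1 then t else 1) * (if b = axis j 1 then t else 1))"
  have pg: "\<And>z::real^'n. (\<Prod>b\<in>Basis. g b (z \<bullet> b)) = z$i * z$j"
    unfolding g_def by (simp add: prod.distrib prod.delta cart_eq_inner_axis)
  have ig: "\<And>b. integrable lborel (\<lambda>t. normal_density (m \<bullet> b) (sqrt s) t * g b t)"
    unfolding g_def using integrable_normal_density[OF si] integrable_normal_moment_nz_1[OF si] nd_xx(1)[OF si]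
    by (case_tac "b = axis i 1"; case_tac "b = axis j 1") auto
  have vg: "\<And>b. (\<integral>t. normal_density (m \<bullet> b) (sqrt s) t * g b t \<partial>lborel) =
      (if b = axis i 1 then (if b = axis j 1 then s + (m \<bullet> b)\<^sup>2 else m \<bullet> b) else if b = axis j 1 then m \<bullet> b else 1)"
    unfolding g_def using integral_normal_density[OF si] integral_normal_moment_nz_1[OF si] nd_xx(2)[OF si] s by auto
  note G = gauss_prod_int[OF s, of m g, OF ig]
  show "integrable lborel (\<lambda>z. gauss_iso z m s * (z$i * z$j))"
    using G(1) by (simp add: pg)
  have "(\<integral>z. gauss_iso z m s * (z$i * z$j) \<partial>lborel) = (\<Prod>b\<in>Basis. (if b = axis i 1 then (if b = axis j 1 then s + (m \<bullet> b)\<^sup>2 else m \<bullet> b) else if b = axis j 1 then m \<bullet> b else 1))"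
    using G(2) by (simp add: pg vg)
  also have "\<dots> = m$i * m$j + (if i = j then s else 0)"
  proof (cases "i = j")
    case True
    have "(\<Prod>b\<in>Basis. (if b = axis i 1 then (if b = axis j 1 then s + (m \<bullet> b)\<^sup>2 else m \<bullet> b) else if b = axis j 1 then m \<bullet> b else 1))
        = (\<Prod>b\<in>(Basis::(real^'n) set). (if b = axis i 1 then s + (m \<bullet> b)\<^sup>2 else 1))"
      using True by (intro prod.cong) auto
    then show ?thesis using True by (simp add: prod.delta cart_eq_inner_axis power2_eq_square)
  next
    case False
    then have ne: "axis i (1::real) \<noteq> axis j 1" by (simp add: axis_eq_axis)
    have "(\<Prod>b\<in>Basis. (if b = axis i 1 then (if b = axis j 1 then s + (m \<bullet> b)\<^sup>2 else m \<bullet> b) else if b = axis j 1 then m \<bullet> b else 1))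
        = (\<Prod>b\<in>(Basis::(real^'n) set). (if b = axis i 1 then m \<bullet> b else 1) * (if b = axis j 1 then m \<bullet> b else 1))"
      using ne by (intro prod.cong) auto
    then show ?thesis using False by (simp add: prod.distrib prod.delta cart_eq_inner_axis)
  qed
  finally show "(\<integral>z. gauss_iso z m s * (z$i * z$j) \<partial>lborel) = m$i * m$j + (if i = j then s else 0)" .
qed

lemma exp_quad_taylor:
  fixes A B C b :: real
  assumes b: "0 < b" and A: "0 \<le> A" and C: "0 \<le> C" and BAC: "B\<^sup>2 \<le> A * C"
  shows "\<bar>exp (-(A + 2*B + C)/(2*b)) - exp (-A/(2*b)) + exp (-A/(2*b)) * B / b\<bar> \<le> 2 * C / b"
proof -
  define Q where "Q t = A + 2*B*t + C*t\<^sup>2" for t :: real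
  define psi where "psi t = exp (- Q t / (2*b))" for t
  define d1 where "d1 t = psi t * (-(B + C*t)/b)" for t
  define d2 where "d2 t = psi t * ((B + C*t)\<^sup>2/b\<^sup>2 - C/b)" for t
  define diff where "diff m = (if m = 0 then psi else if m = 1 then d1 else d2)" for m :: nat
  have Dpsi: "DERIV psi t :> d1 t" for t
    unfolding psi_def d1_def Q_def using b
    by (auto intro!: derivative_eq_intros simp: field_simps power2_eq_square)
  have Dd1: "DERIV d1 t :> d2 t" for t
  proof -
    have g: "DERIV (\<lambda>t. -(B + C*t)/b) t :> -C/b"
      using b by (auto intro!: derivative_eq_intros simp: field_simps)
    have "DERIV (\<lambda>t. psi t * (-(B + C*t)/b)) t :> d1 t * (-(B + C*t)/b) + (- C / b) * psi t"
      by (rule DERIV_mult[OF Dpsi g])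
    moreover have "(\<lambda>t. psi t * (-(B + C*t)/b)) = d1" by (simp add: d1_def fun_eq_iff)
    ultimately have "DERIV d1 t :> d1 t * (-(B + C*t)/b) + (- C / b) * psi t" by simp
    moreover have "d1 t * (-(B + C*t)/b) + (- C / b) * psi t = d2 t"
      unfolding d1_def d2_def using b by (simp add: field_simps power2_eq_square)
    ultimately show ?thesis by simp
  qed
  have "\<forall>m t. m < 2 \<and> 0 \<le> t \<and> t \<le> 1 \<longrightarrow> DERIV (diff m) t :> diff (Suc m) t"
    using Dpsi Dd1 by (auto simp: diff_def less_2_cases_iff)
  then obtain t where t: "0 < t" "t < 1"
    and tay: "psi 1 = (\<Sum>m<2. diff m 0 / fact m * 1 ^ m) + diff 2 t / fact 2 * 1 ^ 2"
    using Maclaurin[of 1 2 diff psi] by (auto simp: diff_def)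
  have tay': "psi 1 = psi 0 + d1 0 + d2 t / 2"
    using tay by (simp add: diff_def eval_nat_numeral)
  have Qnn: "0 \<le> Q t"
  proof (cases "C = 0")
    case True
    then have "B = 0" using BAC by simp
    then show ?thesis using True A by (simp add: Q_def)
  next
    case False
    then have "0 < C" using C by simp
    have "C * Q t = (B + C*t)\<^sup>2 + (A*C - B\<^sup>2)"
      by (simp add: Q_def algebra_simps power2_eq_square)
    also have "\<dots> \<ge> 0" using BAC by simp
    finally show ?thesis using \<open>0 < C\<close> by (simp add: zero_le_mult_iff)
  qed
  have BC: "(B + C*t)\<^sup>2 \<le> C * Q t"
    using BAC by (simp add: Q_def algebra_simps power2_eq_square)
  have psi_le: "psi t \<le> 1" "0 < psi t"
    using Qnn b by (auto simp: psi_def)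
  have rb: "psi t * Q t \<le> 2 * b"
  proof -
    define r where "r = Q t / (2*b)"
    have r0: "0 \<le> r" using Qnn b by (simp add: r_def)
    have "r \<le> exp r" using exp_ge_add_one_self[of r] by linarith
    then have "exp (-r) * r \<le> 1"
      by (simp add: exp_minus field_simps)
    then show ?thesis using b by (simp add: psi_def r_def field_simps)
  qed
  have "\<bar>d2 t\<bar> \<le> psi t * (B + C*t)\<^sup>2/b\<^sup>2 + psi t * (C/b)"
    unfolding d2_def using psi_le b C
    by (simp add: abs_mult right_diff_distrib) (smt (verit, best) divide_nonneg_nonneg mult_nonneg_nonneg zero_le_power2)
  also have "psi t * (B + C*t)\<^sup>2/b\<^sup>2 \<le> psi t * (C * Q t) / b\<^sup>2"
    using BC psi_le b by (intro divide_right_mono mult_left_mono) auto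
  also have "psi t * (C * Q t) / b\<^sup>2 = C * (psi t * Q t) / b\<^sup>2" by simp
  also have "\<dots> \<le> C * (2*b) / b\<^sup>2"
    using rb C b by (intro divide_right_mono mult_left_mono) auto
  also have "C * (2*b) / b\<^sup>2 = 2 * C / b" using b by (simp add: power2_eq_square)
  also have "psi t * (C/b) \<le> C / b" using psi_le C b
    by (intro mult_left_le_one_le) auto
  finally have d2b: "\<bar>d2 t\<bar> \<le> 2 * C / b + C / b" by simp
  have e: "exp (-(A + 2*B + C)/(2*b)) - exp (-A/(2*b)) + exp (-A/(2*b)) * B / b = d2 t / 2"
    using tay' by (simp add: psi_def d1_def Q_def)
  have c3: "(2 * C / b + C / b) / 2 \<le> 2 * C / b" using C b by (simp add: field_simps)
  have "\<bar>d2 t / 2\<bar> = \<bar>d2 t\<bar> / 2" by simp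
  also have "\<dots> \<le> (2 * C / b + C / b) / 2" using d2b by simp
  finally show ?thesis unfolding e using c3 by linarith
qed

lemma kernel_taylor:
  fixes x y h :: "real^'n"
  assumes a0: "0 < a" and a1: "a < 1"
  shows "\<bar>fwd_kernel a (y + h) x - fwd_kernel a y x - fwd_kernel a y x * (((sqrt a *\<^sub>R x - y) \<bullet> h) / (1 - a))\<bar>
     \<le> (2 * pi * (1 - a)) powr (- real CARD('n) / 2) * (2 * (norm h)\<^sup>2 / (1 - a))"
proof -
  define K where "K = (2 * pi * (1 - a)) powr (- real CARD('n) / 2)"
  define u where "u = y - sqrt a *\<^sub>R x"
  have K0: "0 \<le> K" by (simp add: K_def)
  have b: "0 < 1 - a" using a1 by simp
  have n1: "(norm (y + h - sqrt a *\<^sub>R x))\<^sup>2 = (norm u)\<^sup>2 + 2 * (u \<bullet> h) + (norm h)\<^sup>2"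
  proof -
    have e: "y + h - sqrt a *\<^sub>R x = u + h" by (simp add: u_def algebra_simps)
    show ?thesis unfolding e by (simp add: power2_norm_eq_inner inner_add_left inner_add_right inner_commute)
  qed
  have n0: "(norm (y - sqrt a *\<^sub>R x))\<^sup>2 = (norm u)\<^sup>2" by (simp add: u_def)
  have ip: "(sqrt a *\<^sub>R x - y) \<bullet> h = - (u \<bullet> h)" by (simp add: u_def inner_diff_left)
  have CS: "(u \<bullet> h)\<^sup>2 \<le> (norm u)\<^sup>2 * (norm h)\<^sup>2"
    by (metis Cauchy_Schwarz_ineq power2_norm_eq_inner)
  have T: "\<bar>exp (-((norm u)\<^sup>2 + 2*(u \<bullet> h) + (norm h)\<^sup>2)/(2*(1-a))) - exp (-(norm u)\<^sup>2/(2*(1-a)))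
      + exp (-(norm u)\<^sup>2/(2*(1-a))) * (u \<bullet> h) / (1-a)\<bar> \<le> 2 * (norm h)\<^sup>2 / (1-a)"
    by (rule exp_quad_taylor[OF b]) (use CS in auto)
  have eq: "fwd_kernel a (y + h) x - fwd_kernel a y x - fwd_kernel a y x * (((sqrt a *\<^sub>R x - y) \<bullet> h) / (1 - a))
     = K * (exp (-((norm u)\<^sup>2 + 2*(u \<bullet> h) + (norm h)\<^sup>2)/(2*(1-a))) - exp (-(norm u)\<^sup>2/(2*(1-a)))
      + exp (-(norm u)\<^sup>2/(2*(1-a))) * (u \<bullet> h) / (1-a))"
    unfolding fwd_kernel_def gauss_iso_def K_def[symmetric] n1 n0 ip
    by (simp add: algebra_simps)
  show ?thesis
    unfolding eq K_def[symmetric] abs_mult abs_of_nonneg[OF K0] using K0 by (rule mult_left_mono[OF T])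
qed


lemma le_1_sq: "(t::real) \<le> 1 + t\<^sup>2"
proof -
  have h1: "0 \<le> (t - 1)\<^sup>2" and h2: "0 \<le> t * t" by simp_all
  have h3: "t * 2 \<le> 1 + t * t" using h1 by (simp add: power2_eq_square algebra_simps)
  show ?thesis unfolding power2_eq_square using h2 h3 by linarith
qed

lemma comp_le_sq: "\<bar>(x::real^'n)$i\<bar> \<le> 1 + (norm x)\<^sup>2"
  using component_le_norm_cart[of x i] le_1_sq[of "norm x"] by linarith

lemma comp2_le_sq: "\<bar>(x::real^'n)$i * x$j\<bar> \<le> (norm x)\<^sup>2"
  using component_le_norm_cart[of x i] component_le_norm_cart[of x j]
  by (simp add: abs_mult power2_eq_square mult_mono)

lemma comp_xy_le: "\<bar>(x::real^'n)$i * (y::real^'n)$j\<bar> \<le> (norm x)\<^sup>2 + (norm y)\<^sup>2"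
proof -
  have "\<bar>x$i * y$j\<bar> \<le> norm x * norm y"
    using component_le_norm_cart[of x i] component_le_norm_cart[of y j]
    by (simp add: abs_mult mult_mono)
  also have "\<dots> \<le> (norm x)\<^sup>2 + (norm y)\<^sup>2"
  proof -
    have h1: "0 \<le> (norm x - norm y)\<^sup>2" and h2: "0 \<le> norm x * norm y" by simp_all
    have h3: "norm x * norm y * 2 \<le> norm x * norm x + norm y * norm y"
      using h1 by (simp add: power2_eq_square algebra_simps)
    show ?thesis unfolding power2_eq_square using h2 h3 by linarith
  qed
  finally show ?thesis .
qed

lemma ps: "pair_sigma_finite (lborel::('a::euclidean_space) measure) (lborel::('b::euclidean_space) measure)"
  by (simp add: pair_sigma_finite_def lborel.sigma_finite_measure_axioms)

locale setting =
  fixes q0 :: "real^'n \<Rightarrow> real" and a :: real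
  assumes pd: "prob_density_2 q0" and a0: "0 < a" and a1: "a < 1"
begin

definition Kc :: real where "Kc = (2 * pi * (1 - a)) powr (- real CARD('n) / 2)"

lemma q0_meas[measurable]: "q0 \<in> borel_measurable borel"
  using pd by (simp add: prob_density_2_def)
lemma q0_nn: "0 \<le> q0 x"
  using pd by (simp add: prob_density_2_def)
lemma q0_int: "integrable lborel q0"
  using pd by (simp add: prob_density_2_def)
lemma q0_one: "(\<integral>x. q0 x \<partial>lborel) = 1"
  using pd by (simp add: prob_density_2_def)
lemma q0_sq: "integrable lborel (\<lambda>x. q0 x * (norm x)\<^sup>2)"
  using pd by (simp add: prob_density_2_def)

lemma b_pos: "0 < 1 - a" using a1 by simp

lemma k_pos: "0 < fwd_kernel a (y::real^'n) x"
  using b_pos by (simp add: fwd_kernel_def gauss_iso_def)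

lemma k_le: "fwd_kernel a (y::real^'n) x \<le> Kc"
proof -
  have "- (norm (y - sqrt a *\<^sub>R x))\<^sup>2 / (2 * (1 - a)) \<le> 0"
    using b_pos by (simp add: divide_nonpos_pos)
  then have "exp (- (norm (y - sqrt a *\<^sub>R x))\<^sup>2 / (2 * (1 - a))) \<le> 1" by simp
  then show ?thesis
    unfolding fwd_kernel_def gauss_iso_def Kc_def
    by (intro mult_left_le) (use a1 in auto)
qed

lemma Kc_pos: "0 < Kc" using a1 by (simp add: Kc_def)

lemma k_meas[measurable]: "(\<lambda>p. fwd_kernel a (snd p) (fst p)) \<in> borel_measurable (lborel \<Otimes>\<^sub>M lborel)"
  unfolding fwd_kernel_def gauss_iso_def by measurable

lemma k_meas1[measurable]: "(\<lambda>x. fwd_kernel a y x) \<in> borel_measurable borel"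
  unfolding fwd_kernel_def gauss_iso_def by measurable

lemma k_meas2[measurable]: "(\<lambda>y. fwd_kernel a y x) \<in> borel_measurable borel"
  unfolding fwd_kernel_def gauss_iso_def by measurable

lemma q0_dom: "integrable lborel (\<lambda>x. Kc * (q0 x * (1 + (norm x)\<^sup>2)))"
  using q0_int q0_sq by (auto simp: distrib_left)

lemma int_x_gen:
  assumes [measurable]: "h \<in> borel_measurable borel" and hb: "\<And>x. \<bar>h x\<bar> \<le> 1 + (norm x)\<^sup>2"
  shows "integrable lborel (\<lambda>x. q0 x * fwd_kernel a y x * h x)"
proof (rule Bochner_Integration.integrable_bound[OF q0_dom])
  show "(\<lambda>x. q0 x * fwd_kernel a y x * h x) \<in> borel_measurable lborel" by simp
  show "AE x in lborel. norm (q0 x * fwd_kernel a y x * h x) \<le> norm (Kc * (q0 x * (1 + (norm x)\<^sup>2)))"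
  proof
    fix x
    have "\<bar>q0 x * fwd_kernel a y x * h x\<bar> = q0 x * fwd_kernel a y x * \<bar>h x\<bar>"
      using q0_nn k_pos by (simp add: abs_mult less_imp_le)
    also have "\<dots> \<le> q0 x * Kc * (1 + (norm x)\<^sup>2)"
      using q0_nn less_imp_le[OF k_pos] k_le hb Kc_pos by (intro mult_mono) auto
    finally show "norm (q0 x * fwd_kernel a y x * h x) \<le> norm (Kc * (q0 x * (1 + (norm x)\<^sup>2)))"
      using q0_nn Kc_pos by (simp add: abs_mult mult_ac)
  qed
qed

lemma int_x0: "integrable lborel (\<lambda>x. q0 x * fwd_kernel a y x)"
  using int_x_gen[of "\<lambda>x. 1" y] by simp

lemma int_x1: "integrable lborel (\<lambda>x. q0 x * fwd_kernel a y x * x$i)"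
  by (rule int_x_gen) (auto intro: comp_le_sq)

lemma int_x2: "integrable lborel (\<lambda>x. q0 x * fwd_kernel a y x * (x$i * x$j))"
  by (rule int_x_gen, simp, rule order.trans[OF comp2_le_sq], simp)

lemma nsq: "(norm (y::real^'n))\<^sup>2 = (\<Sum>l\<in>UNIV. y$l * y$l)"
  by (simp add: power2_norm_eq_inner inner_vec_def)

lemma ky0: "integrable lborel (\<lambda>y. fwd_kernel a y x)" "(\<integral>y. fwd_kernel a y (x::real^'n) \<partial>lborel) = 1"
  unfolding fwd_kernel_def using gauss_m0[OF b_pos] by auto

lemma ky1: "integrable lborel (\<lambda>y. fwd_kernel a y x * y$i)"
  "(\<integral>y. fwd_kernel a y (x::real^'n) * y$i \<partial>lborel) = sqrt a * x$i"
  unfolding fwd_kernel_def using gauss_m1[OF b_pos] gauss_m1(2)[OF b_pos, of "sqrt a *\<^sub>R x" i] by auto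

lemma ky2: "integrable lborel (\<lambda>y. fwd_kernel a y x * (y$i * y$j))"
  "(\<integral>y. fwd_kernel a y (x::real^'n) * (y$i * y$j) \<partial>lborel) = a * (x$i * x$j) + (if i = j then 1 - a else 0)"
proof -
  have sa: "sqrt a * sqrt a = a" using a0 by simp
  show "integrable lborel (\<lambda>y. fwd_kernel a y x * (y$i * y$j))"
    unfolding fwd_kernel_def using gauss_m2[OF b_pos] by auto
  have "(\<integral>y. fwd_kernel a y (x::real^'n) * (y$i * y$j) \<partial>lborel) = (sqrt a * x$i) * (sqrt a * x$j) + (if i = j then 1 - a else 0)"
    unfolding fwd_kernel_def using gauss_m2(2)[OF b_pos, of "sqrt a *\<^sub>R x" i j] by simp
  also have "\<dots> = a * (x$i * x$j) + (if i = j then 1 - a else 0)"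
    using sa by (simp add: algebra_simps)
  finally show "(\<integral>y. fwd_kernel a y (x::real^'n) * (y$i * y$j) \<partial>lborel) = a * (x$i * x$j) + (if i = j then 1 - a else 0)" .
qed

lemma ky_sq: "integrable lborel (\<lambda>y. fwd_kernel a y x * (norm y)\<^sup>2)"
  "(\<integral>y. fwd_kernel a y (x::real^'n) * (norm y)\<^sup>2 \<partial>lborel) = a * (norm x)\<^sup>2 + real CARD('n) * (1 - a)"
proof -
  have e: "(\<lambda>y. fwd_kernel a y x * (norm y)\<^sup>2) = (\<lambda>y. \<Sum>l\<in>UNIV. fwd_kernel a y x * (y$l * y$l))"
    by (simp add: nsq sum_distrib_left)
  show "integrable lborel (\<lambda>y. fwd_kernel a y x * (norm y)\<^sup>2)"
    unfolding e by (rule Bochner_Integration.integrable_sum) (rule ky2(1))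
  have "(\<integral>y. fwd_kernel a y (x::real^'n) * (norm y)\<^sup>2 \<partial>lborel) = (\<Sum>l\<in>UNIV. a * (x$l * x$l) + (1 - a))"
    unfolding e by (subst Bochner_Integration.integral_sum) (auto intro: ky2(1) simp: ky2(2))
  also have "\<dots> = a * (norm x)\<^sup>2 + real CARD('n) * (1 - a)"
    by (simp add: sum.distrib nsq sum_distrib_left)
  finally show "(\<integral>y. fwd_kernel a y (x::real^'n) * (norm y)\<^sup>2 \<partial>lborel) = a * (norm x)\<^sup>2 + real CARD('n) * (1 - a)" .
qed

lemma H_int: "integrable (lborel \<Otimes>\<^sub>M lborel)
   (\<lambda>(x, y). q0 x * fwd_kernel a y x * (1 + (norm x)\<^sup>2 + (norm (y::real^'n))\<^sup>2))"
proof -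
  define H where "H = (\<lambda>(x, y). q0 x * fwd_kernel a y x * (1 + (norm x)\<^sup>2 + (norm (y::real^'n))\<^sup>2))"
  have Hy: "(\<lambda>y. H (x, y)) = (\<lambda>y. q0 x * (1 + (norm x)\<^sup>2) * fwd_kernel a y x + q0 x * (fwd_kernel a y x * (norm y)\<^sup>2))" for x
    by (simp add: H_def fun_eq_iff algebra_simps)
  have iy: "integrable lborel (\<lambda>y. H (x, y))" for x
    unfolding Hy using ky0(1) ky_sq(1) by auto
  have vy: "(\<integral>y. H (x, y) \<partial>lborel) = q0 x * (1 + (norm x)\<^sup>2) + q0 x * (a * (norm x)\<^sup>2 + real CARD('n) * (1 - a))" for x
    unfolding Hy using ky0 ky_sq by simp
  have Hnn: "0 \<le> H (x, y)" for x y
    unfolding H_def using q0_nn[of x] k_pos[of y x] by simp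
  have "integrable (lborel \<Otimes>\<^sub>M lborel) H"
  proof (rule pair_sigma_finite.Fubini_integrable[OF ps])
    show "H \<in> borel_measurable (lborel \<Otimes>\<^sub>M lborel)" unfolding H_def by measurable
    show "AE x in lborel. integrable lborel (\<lambda>y. H (x, y))" using iy by simp
    have "(\<lambda>x. \<integral>y. norm (H (x, y)) \<partial>lborel) = (\<lambda>x. q0 x * (1 + (norm x)\<^sup>2) + q0 x * (a * (norm x)\<^sup>2 + real CARD('n) * (1 - a)))"
      using Hnn vy by (simp add: fun_eq_iff)
    moreover have "integrable lborel (\<lambda>x. q0 x * (1 + (norm x)\<^sup>2) + q0 x * (a * (norm x)\<^sup>2 + real CARD('n) * (1 - a)))"
      using q0_int q0_sq by (auto simp: distrib_left algebra_simps)
    ultimately show "integrable lborel (\<lambda>x. \<integral>y. norm (H (x, y)) \<partial>lborel)" by simp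
  qed
  then show ?thesis by (simp add: H_def)
qed

lemma vec_nth_meas[measurable]: "(\<lambda>x::real^'n. x$i) \<in> borel_measurable borel"
  by (intro borel_measurable_continuous_onI continuous_intros)

lemma F_int:
  assumes hm: "case_prod h \<in> borel_measurable (lborel \<Otimes>\<^sub>M lborel)"
    and hb: "\<And>x y. \<bar>h x y\<bar> \<le> 1 + (norm x)\<^sup>2 + (norm (y::real^'n))\<^sup>2"
  shows "integrable (lborel \<Otimes>\<^sub>M lborel) (\<lambda>(x, y). q0 x * fwd_kernel a y x * h x y)"
proof (rule Bochner_Integration.integrable_bound[OF H_int])
  have "(\<lambda>p. q0 (fst p) * fwd_kernel a (snd p) (fst p) * case_prod h p) \<in> borel_measurable (lborel \<Otimes>\<^sub>M lborel)"
    using hm by measurable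
  then show "(\<lambda>(x, y). q0 x * fwd_kernel a y x * h x y) \<in> borel_measurable (lborel \<Otimes>\<^sub>M lborel)"
    by (simp add: split_beta')
  show "AE p in lborel \<Otimes>\<^sub>M lborel. norm ((\<lambda>(x, y). q0 x * fwd_kernel a y x * h x y) p)
      \<le> norm ((\<lambda>(x, y). q0 x * fwd_kernel a y x * (1 + (norm x)\<^sup>2 + (norm (y::real^'n))\<^sup>2)) p)"
  proof (rule AE_I2, clarify)
    fix x y :: "real^'n"
    have "\<bar>q0 x * fwd_kernel a y x * h x y\<bar> = q0 x * fwd_kernel a y x * \<bar>h x y\<bar>"
      using q0_nn[of x] k_pos[of y x] by (simp add: abs_mult)
    also have "\<dots> \<le> q0 x * fwd_kernel a y x * (1 + (norm x)\<^sup>2 + (norm y)\<^sup>2)"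
      using q0_nn[of x] k_pos[of y x] hb[of x y] by (intro mult_left_mono) auto
    also have "\<dots> = \<bar>q0 x * fwd_kernel a y x * (1 + (norm x)\<^sup>2 + (norm y)\<^sup>2)\<bar>"
      using q0_nn[of x] k_pos[of y x] by (simp add: abs_mult)
    finally show "norm (q0 x * fwd_kernel a y x * h x y) \<le> norm (q0 x * fwd_kernel a y x * (1 + (norm x)\<^sup>2 + (norm y)\<^sup>2))"
      by simp
  qed
qed

lemma q0_dom1: "integrable lborel (\<lambda>x. q0 x * (1 + (norm x)\<^sup>2))"
  using q0_int q0_sq by (auto simp: distrib_left)

lemma q_gen:
  assumes [measurable]: "h \<in> borel_measurable borel" and hb: "\<And>x. \<bar>h x\<bar> \<le> 1 + (norm x)\<^sup>2"
  shows "integrable lborel (\<lambda>x. q0 x * h x)"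
proof (rule Bochner_Integration.integrable_bound[OF q0_dom1])
  show "(\<lambda>x. q0 x * h x) \<in> borel_measurable lborel" by simp
  show "AE x in lborel. norm (q0 x * h x) \<le> norm (q0 x * (1 + (norm x)\<^sup>2))"
  proof (rule AE_I2)
    fix x :: "real^'n"
    have "\<bar>q0 x * h x\<bar> \<le> q0 x * (1 + (norm x)\<^sup>2)"
      using q0_nn[of x] hb[of x] by (simp add: abs_mult mult_left_mono)
    then show "norm (q0 x * h x) \<le> norm (q0 x * (1 + (norm x)\<^sup>2))"
      using q0_nn[of x] by (simp add: abs_mult)
  qed
qed

lemma q1: "integrable lborel (\<lambda>x. q0 x * (x::real^'n)$i)"
  by (rule q_gen) (auto intro: comp_le_sq)

lemma q2: "integrable lborel (\<lambda>x. q0 x * ((x::real^'n)$i * x$j))"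
  by (rule q_gen, simp, rule order.trans[OF comp2_le_sq], simp)

definition Zf :: "real^'n \<Rightarrow> real" where "Zf y = (\<integral>x. q0 x * fwd_kernel a y x \<partial>lborel)"
definition Mf :: "real^'n \<Rightarrow> 'n \<Rightarrow> real" where "Mf y i = (\<integral>x. q0 x * fwd_kernel a y x * x$i \<partial>lborel)"
definition Sf :: "real^'n \<Rightarrow> 'n \<Rightarrow> 'n \<Rightarrow> real" where "Sf y i j = (\<integral>x. q0 x * fwd_kernel a y x * (x$i * x$j) \<partial>lborel)"
definition mu :: "'n \<Rightarrow> real" where "mu i = (\<integral>x. q0 x * (x::real^'n)$i \<partial>lborel)"
definition Qm :: "'n \<Rightarrow> 'n \<Rightarrow> real" where "Qm i j = (\<integral>x. q0 x * ((x::real^'n)$i * x$j) \<partial>lborel)"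

lemma F0: "integrable lborel Zf" "(\<integral>y. Zf y \<partial>lborel) = 1"
proof -
  have I: "integrable (lborel \<Otimes>\<^sub>M lborel) (\<lambda>(x, y). q0 x * fwd_kernel a y x * (\<lambda>x y. 1) x (y::real^'n))"
    by (rule F_int) auto
  have e1: "Zf = (\<lambda>y. \<integral>x. q0 x * fwd_kernel a y x * (\<lambda>x y. 1) x y \<partial>lborel)"
    by (simp add: Zf_def fun_eq_iff)
  show "integrable lborel Zf" unfolding e1 by (rule pair_sigma_finite.integrable_snd[OF ps I])
  have "(\<integral>y. Zf y \<partial>lborel) = (\<integral>x. \<integral>y. q0 x * fwd_kernel a y x * (\<lambda>x y. 1) x y \<partial>lborel \<partial>lborel)"
    unfolding e1 by (rule pair_sigma_finite.Fubini_integral[OF ps I])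
  also have "\<dots> = (\<integral>x. q0 x \<partial>lborel)"
    by (simp add: ky0)
  finally show "(\<integral>y. Zf y \<partial>lborel) = 1" using q0_one by simp
qed

lemma F1: "integrable lborel (\<lambda>y. Mf y i)" "(\<integral>y. Mf y i \<partial>lborel) = mu i"
proof -
  have I: "integrable (lborel \<Otimes>\<^sub>M lborel) (\<lambda>(x, y). q0 x * fwd_kernel a y x * (\<lambda>x (y::real^'n). x$i) x y)"
    by (rule F_int[of "\<lambda>x y. x$i"], unfold split_beta', measurable) (auto intro: comp_le_sq order.trans)
  have e1: "(\<lambda>y. Mf y i) = (\<lambda>y. \<integral>x. q0 x * fwd_kernel a y x * (\<lambda>x (y::real^'n). x$i) x y \<partial>lborel)"
    by (simp add: Mf_def fun_eq_iff)
  show "integrable lborel (\<lambda>y. Mf y i)" unfolding e1 by (rule pair_sigma_finite.integrable_snd[OF ps I])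
  have "(\<integral>y. Mf y i \<partial>lborel) = (\<integral>x. \<integral>y. q0 x * fwd_kernel a y x * (\<lambda>x (y::real^'n). x$i) x y \<partial>lborel \<partial>lborel)"
    unfolding e1 by (rule pair_sigma_finite.Fubini_integral[OF ps I])
  also have "\<dots> = (\<integral>x. q0 x * x$i \<partial>lborel)"
    by (simp add: ky0 mult_ac)
  finally show "(\<integral>y. Mf y i \<partial>lborel) = mu i" by (simp add: mu_def)
qed

lemma F2: "integrable lborel (\<lambda>y. Sf y i j)" "(\<integral>y. Sf y i j \<partial>lborel) = Qm i j"
proof -
  have I: "integrable (lborel \<Otimes>\<^sub>M lborel) (\<lambda>(x, y). q0 x * fwd_kernel a y x * (\<lambda>x (y::real^'n). x$i * x$j) x y)"
    by (rule F_int[of "\<lambda>x y. x$i * x$j"], unfold split_beta', measurable, rule order.trans[OF comp2_le_sq], simp)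
  have e1: "(\<lambda>y. Sf y i j) = (\<lambda>y. \<integral>x. q0 x * fwd_kernel a y x * (\<lambda>x (y::real^'n). x$i * x$j) x y \<partial>lborel)"
    by (simp add: Sf_def fun_eq_iff)
  show "integrable lborel (\<lambda>y. Sf y i j)" unfolding e1 by (rule pair_sigma_finite.integrable_snd[OF ps I])
  have "(\<integral>y. Sf y i j \<partial>lborel) = (\<integral>x. \<integral>y. q0 x * fwd_kernel a y x * (\<lambda>x (y::real^'n). x$i * x$j) x y \<partial>lborel \<partial>lborel)"
    unfolding e1 by (rule pair_sigma_finite.Fubini_integral[OF ps I])
  also have "\<dots> = (\<integral>x. q0 x * (x$i * x$j) \<partial>lborel)"
    by (simp add: ky0 mult_ac)
  finally show "(\<integral>y. Sf y i j \<partial>lborel) = Qm i j" by (simp add: Qm_def)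
qed

lemma F3: "integrable lborel (\<lambda>y. y$j * Mf y i)" "(\<integral>y. y$j * Mf y i \<partial>lborel) = sqrt a * Qm i j"
proof -
  have I: "integrable (lborel \<Otimes>\<^sub>M lborel) (\<lambda>(x, y). q0 x * fwd_kernel a y x * (\<lambda>x (y::real^'n). x$i * y$j) x y)"
    by (rule F_int[of "\<lambda>x y. x$i * y$j"], unfold split_beta', measurable, rule order.trans[OF comp_xy_le], simp)
  have e1: "(\<lambda>y. y$j * Mf y i) = (\<lambda>y. \<integral>x. q0 x * fwd_kernel a y x * (\<lambda>x (y::real^'n). x$i * y$j) x y \<partial>lborel)"
  proof
    fix y :: "real^'n"
    have "(\<lambda>x. q0 x * fwd_kernel a y x * (x$i * y$j)) = (\<lambda>x. y$j * (q0 x * fwd_kernel a y x * x$i))"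
      by (simp add: fun_eq_iff mult_ac)
    then show "y$j * Mf y i = (\<integral>x. q0 x * fwd_kernel a y x * (\<lambda>x (y::real^'n). x$i * y$j) x y \<partial>lborel)"
      by (simp add: Mf_def)
  qed
  show "integrable lborel (\<lambda>y. y$j * Mf y i)" unfolding e1 by (rule pair_sigma_finite.integrable_snd[OF ps I])
  have "(\<integral>y. y$j * Mf y i \<partial>lborel) = (\<integral>x. \<integral>y. q0 x * fwd_kernel a y x * (\<lambda>x (y::real^'n). x$i * y$j) x y \<partial>lborel \<partial>lborel)"
    unfolding e1 by (rule pair_sigma_finite.Fubini_integral[OF ps I])
  also have "\<dots> = (\<integral>x. sqrt a * (q0 x * (x$i * x$j)) \<partial>lborel)"
  proof (rule Bochner_Integration.integral_cong[OF refl])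
    fix x :: "real^'n"
    have "(\<integral>y. q0 x * fwd_kernel a y x * (x$i * y$j) \<partial>lborel) = (\<integral>y. (q0 x * x$i) * (fwd_kernel a y x * y$j) \<partial>lborel)"
      by (simp add: mult_ac)
    also have "\<dots> = (q0 x * x$i) * (sqrt a * x$j)"
      by (simp only: integral_mult_right_zero ky1(2))
    finally show "(\<integral>y. q0 x * fwd_kernel a y x * (\<lambda>x (y::real^'n). x$i * y$j) x y \<partial>lborel) = sqrt a * (q0 x * (x$i * x$j))"
      by (simp add: mult_ac)
  qed
  finally show "(\<integral>y. y$j * Mf y i \<partial>lborel) = sqrt a * Qm i j" by (simp add: Qm_def)
qed

lemma F4: "integrable lborel (\<lambda>y. y$i * y$j * Zf y)"
  "(\<integral>y. y$i * y$j * Zf y \<partial>lborel) = a * Qm i j + (if i = j then 1 - a else 0)"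
proof -
  have I: "integrable (lborel \<Otimes>\<^sub>M lborel) (\<lambda>(x, y). q0 x * fwd_kernel a y x * (\<lambda>x (y::real^'n). y$i * y$j) x y)"
    by (rule F_int[of "\<lambda>x y. y$i * y$j"], unfold split_beta', measurable, rule order.trans[OF comp2_le_sq], simp)
  have e1: "(\<lambda>y. y$i * y$j * Zf y) = (\<lambda>y. \<integral>x. q0 x * fwd_kernel a y x * (\<lambda>x (y::real^'n). y$i * y$j) x y \<partial>lborel)"
  proof
    fix y :: "real^'n"
    have "(\<lambda>x. q0 x * fwd_kernel a y x * (y$i * y$j)) = (\<lambda>x. (y$i * y$j) * (q0 x * fwd_kernel a y x))"
      by (simp add: fun_eq_iff mult_ac)
    then show "y$i * y$j * Zf y = (\<integral>x. q0 x * fwd_kernel a y x * (\<lambda>x (y::real^'n). y$i * y$j) x y \<partial>lborel)"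
      by (simp add: Zf_def)
  qed
  show "integrable lborel (\<lambda>y. y$i * y$j * Zf y)" unfolding e1 by (rule pair_sigma_finite.integrable_snd[OF ps I])
  have "(\<integral>y. y$i * y$j * Zf y \<partial>lborel) = (\<integral>x. \<integral>y. q0 x * fwd_kernel a y x * (\<lambda>x (y::real^'n). y$i * y$j) x y \<partial>lborel \<partial>lborel)"
    unfolding e1 by (rule pair_sigma_finite.Fubini_integral[OF ps I])
  also have "\<dots> = (\<integral>x. a * (q0 x * (x$i * x$j)) + (if i = j then 1 - a else 0) * q0 x \<partial>lborel)"
  proof (rule Bochner_Integration.integral_cong[OF refl])
    fix x :: "real^'n"
    have "(\<integral>y. q0 x * fwd_kernel a y x * (y$i * y$j) \<partial>lborel) = (\<integral>y. q0 x * (fwd_kernel a y x * (y$i * y$j)) \<partial>lborel)"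
      by (simp add: mult_ac)
    also have "\<dots> = q0 x * (a * (x$i * x$j) + (if i = j then 1 - a else 0))"
      by (simp only: integral_mult_right_zero ky2(2))
    finally show "(\<integral>y. q0 x * fwd_kernel a y x * (\<lambda>x (y::real^'n). y$i * y$j) x y \<partial>lborel) = a * (q0 x * (x$i * x$j)) + (if i = j then 1 - a else 0) * q0 x"
      by (simp add: algebra_simps)
  qed
  also have "\<dots> = a * Qm i j + (if i = j then 1 - a else 0)"
    using q2[of i j] q0_int q0_one by (simp add: Qm_def)
  finally show "(\<integral>y. y$i * y$j * Zf y \<partial>lborel) = a * Qm i j + (if i = j then 1 - a else 0)" .
qed

lemma Z_pos: "0 < Zf y"
proof -
  have nn: "0 \<le> Zf y" unfolding Zf_def using q0_nn k_pos
    by (intro Bochner_Integration.integral_nonneg) (simp add: less_imp_le)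
  have "Zf y \<noteq> 0"
  proof
    assume "Zf y = 0"
    then have "AE x in lborel. q0 x * fwd_kernel a y x = 0"
      unfolding Zf_def using q0_nn k_pos int_x0[of y]
      by (subst (asm) integral_nonneg_eq_0_iff_AE) (auto simp: less_imp_le)
    then have "AE x in lborel. q0 x = 0"
      by eventually_elim (metis k_pos less_irrefl mult_eq_0_iff)
    then have "(\<integral>x. q0 x \<partial>lborel) = 0"
      by (rule integral_eq_zero_AE)
    then show False using q0_one by simp
  qed
  with nn show ?thesis by simp
qed

lemma marg_eq: "marg q0 a y = Zf y"
  by (simp add: marg_def Zf_def)

lemma post_eq: "post q0 a y x = q0 x * fwd_kernel a y x / Zf y"
  by (simp add: post_def marg_eq)

lemma post_nn: "0 \<le> post q0 a y x"
  unfolding post_eq using q0_nn[of x] k_pos[of y x] Z_pos[of y] by simp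

lemma post_vec_int: "integrable lborel (\<lambda>x. post q0 a y x *\<^sub>R x)"
proof (rule Bochner_Integration.integrable_bound)
  show "integrable lborel (\<lambda>x. Kc / Zf y * (q0 x * (1 + (norm x)\<^sup>2)))"
    using q0_dom1 by simp
  show "(\<lambda>x. post q0 a y x *\<^sub>R x) \<in> borel_measurable lborel"
    unfolding post_eq by measurable
  show "AE x in lborel. norm (post q0 a y x *\<^sub>R x) \<le> norm (Kc / Zf y * (q0 x * (1 + (norm x)\<^sup>2)))"
  proof (rule AE_I2)
    fix x :: "real^'n"
    have "norm (post q0 a y x *\<^sub>R x) = q0 x * fwd_kernel a y x / Zf y * norm x"
      using q0_nn[of x] k_pos[of y x] Z_pos[of y] by (simp add: post_eq abs_mult)
    also have "\<dots> \<le> q0 x * Kc / Zf y * (1 + (norm x)\<^sup>2)"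
      using q0_nn[of x] k_pos[of y x] k_le[of y x] Z_pos[of y] le_1_sq[of "norm x"]
      by (intro mult_mono divide_right_mono mult_left_mono) auto
    also have "\<dots> = norm (Kc / Zf y * (q0 x * (1 + (norm x)\<^sup>2)))"
      using q0_nn[of x] Kc_pos Z_pos[of y] by (simp add: abs_mult)
    finally show "norm (post q0 a y x *\<^sub>R x) \<le> norm (Kc / Zf y * (q0 x * (1 + (norm x)\<^sup>2)))" .
  qed
qed

lemma dmean_post: "dmean (post q0 a y) $ i = Mf y i / Zf y"
proof -
  have "dmean (post q0 a y) $ i = (\<integral>x. (post q0 a y x *\<^sub>R x) $ i \<partial>lborel)"
    unfolding dmean_def by (rule integral_bounded_linear[OF bounded_linear_vec_nth post_vec_int, symmetric])
  also have "\<dots> = (\<integral>x. q0 x * fwd_kernel a y x * x$i / Zf y \<partial>lborel)"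
    by (simp add: post_eq)
  also have "\<dots> = Mf y i / Zf y" by (simp add: Mf_def)
  finally show ?thesis .
qed

lemma dcov_post: "dcov (post q0 a y) i j = Sf y i j / Zf y - Mf y i * Mf y j / (Zf y)\<^sup>2"
proof -
  define Z where "Z = Zf y"
  define mi where "mi = Mf y i / Z"
  define mj where "mj = Mf y j / Z"
  have Z0: "Z \<noteq> 0" using Z_pos[of y] by (simp add: Z_def)
  have e: "(\<lambda>x. post q0 a y x * ((x$i - dmean (post q0 a y) $ i) * (x$j - dmean (post q0 a y) $ j)))
    = (\<lambda>x. (1/Z) * (q0 x * fwd_kernel a y x * (x$i * x$j)) - (mj/Z) * (q0 x * fwd_kernel a y x * x$i)
         - (mi/Z) * (q0 x * fwd_kernel a y x * x$j) + (mi*mj/Z) * (q0 x * fwd_kernel a y x))"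
    using Z0 by (simp add: fun_eq_iff post_eq dmean_post Z_def[symmetric] mi_def[symmetric] mj_def[symmetric] field_simps)
  have "dcov (post q0 a y) i j = (1/Z) * Sf y i j - (mj/Z) * Mf y i - (mi/Z) * Mf y j + (mi*mj/Z) * Z"
    unfolding dcov_def e using int_x0[of y] int_x1[of y] int_x2[of y]
    by (simp add: Sf_def Mf_def Z_def Zf_def)
  also have "\<dots> = Sf y i j / Zf y - Mf y i * Mf y j / (Zf y)\<^sup>2"
    using Z0 by (simp add: mi_def mj_def Z_def[symmetric] field_simps power2_eq_square)
  finally show ?thesis .
qed

lemma dcov_post_nn: "0 \<le> dcov (post q0 a y) i i"
  unfolding dcov_def using post_nn by (intro Bochner_Integration.integral_nonneg) simp

lemma MM_le: "(Mf y i)\<^sup>2 / Zf y \<le> Sf y i i"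
proof -
  have "0 \<le> Sf y i i / Zf y - Mf y i * Mf y i / (Zf y)\<^sup>2"
    using dcov_post_nn[of y i] dcov_post[of y i i] by simp
  then have "0 \<le> (Sf y i i / Zf y - Mf y i * Mf y i / (Zf y)\<^sup>2) * Zf y"
    using Z_pos[of y] by simp
  also have "\<dots> = Sf y i i - (Mf y i)\<^sup>2 / Zf y"
    using Z_pos[of y] by (simp add: field_simps power2_eq_square)
  finally show ?thesis by simp
qed

lemma Mf_meas[measurable]: "(\<lambda>y. Mf y i) \<in> borel_measurable borel"
  using borel_measurable_integrable[OF F1(1)[of i]] by simp

lemma Zf_meas[measurable]: "Zf \<in> borel_measurable borel"
  using borel_measurable_integrable[OF F0(1)] by simp

lemma Sf_meas[measurable]: "(\<lambda>y. Sf y i j) \<in> borel_measurable borel"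
  using borel_measurable_integrable[OF F2(1)[of i j]] by simp

lemma MMZ_int: "integrable lborel (\<lambda>y. Mf y i * Mf y j / Zf y)"
proof (rule Bochner_Integration.integrable_bound)
  show "integrable lborel (\<lambda>y. Sf y i i + Sf y j j)"
    using F2(1)[of i i] F2(1)[of j j] by auto
  show "(\<lambda>y. Mf y i * Mf y j / Zf y) \<in> borel_measurable lborel" by simp
  show "AE y in lborel. norm (Mf y i * Mf y j / Zf y) \<le> norm (Sf y i i + Sf y j j)"
  proof (rule AE_I2)
    fix y
    have Zp: "0 < Zf y" by (rule Z_pos)
    have "\<bar>Mf y i * Mf y j\<bar> \<le> (Mf y i)\<^sup>2 + (Mf y j)\<^sup>2"
    proof -
      have "0 \<le> (\<bar>Mf y i\<bar> - \<bar>Mf y j\<bar>)\<^sup>2" by simp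
      then show ?thesis by (simp add: abs_mult power2_eq_square algebra_simps)
        (smt (verit) abs_ge_zero mult_nonneg_nonneg)
    qed
    then have "\<bar>Mf y i * Mf y j / Zf y\<bar> \<le> (Mf y i)\<^sup>2 / Zf y + (Mf y j)\<^sup>2 / Zf y"
      using Zp by (simp add: abs_div add_divide_distrib[symmetric] divide_right_mono)
    also have "\<dots> \<le> Sf y i i + Sf y j j" using MM_le[of y i] MM_le[of y j] by simp
    finally show "norm (Mf y i * Mf y j / Zf y) \<le> norm (Sf y i i + Sf y j j)" by simp
  qed
qed

definition Dv :: "real^'n \<Rightarrow> real^'n" where
  "Dv y = (\<chi> l. (sqrt a * Mf y l - y$l * Zf y) / (1 - a))"

lemma lin_part:
  fixes y h :: "real^'n"
  shows "integrable lborel (\<lambda>x. q0 x * fwd_kernel a y x * (((sqrt a *\<^sub>R x - y) \<bullet> h) / (1 - a)))"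
    and "(\<integral>x. q0 x * fwd_kernel a y x * (((sqrt a *\<^sub>R x - y) \<bullet> h) / (1 - a)) \<partial>lborel) = Dv y \<bullet> h"
proof -
  have e: "(\<lambda>x. q0 x * fwd_kernel a y x * (((sqrt a *\<^sub>R x - y) \<bullet> h) / (1 - a)))
    = (\<lambda>x. \<Sum>l\<in>UNIV. (h$l / (1 - a)) * (sqrt a * (q0 x * fwd_kernel a y x * x$l) - y$l * (q0 x * fwd_kernel a y x)))"
    by (simp add: fun_eq_iff inner_vec_def sum_distrib_left sum_divide_distrib algebra_simps diff_divide_distrib)
  show "integrable lborel (\<lambda>x. q0 x * fwd_kernel a y x * (((sqrt a *\<^sub>R x - y) \<bullet> h) / (1 - a)))"
    unfolding e using int_x0[of y] int_x1[of y] by (intro Bochner_Integration.integrable_sum) auto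
  have "(\<integral>x. q0 x * fwd_kernel a y x * (((sqrt a *\<^sub>R x - y) \<bullet> h) / (1 - a)) \<partial>lborel)
      = (\<Sum>l\<in>UNIV. (h$l / (1 - a)) * (sqrt a * Mf y l - y$l * Zf y))"
    unfolding e using int_x0[of y] int_x1[of y]
    by (subst Bochner_Integration.integral_sum) (auto simp: Mf_def Zf_def)
  also have "\<dots> = Dv y \<bullet> h"
    by (simp add: Dv_def inner_vec_def mult_ac)
  finally show "(\<integral>x. q0 x * fwd_kernel a y x * (((sqrt a *\<^sub>R x - y) \<bullet> h) / (1 - a)) \<partial>lborel) = Dv y \<bullet> h" .
qed

lemma Z_taylor:
  fixes y h :: "real^'n"
  shows "\<bar>Zf (y + h) - Zf y - Dv y \<bullet> h\<bar> \<le> Kc * (2 * (norm h)\<^sup>2 / (1 - a))"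
proof -
  define C where "C = Kc * (2 * (norm h)\<^sup>2 / (1 - a))"
  have "Zf (y + h) - Zf y - Dv y \<bullet> h = (\<integral>x. q0 x * (fwd_kernel a (y + h) x - fwd_kernel a y x
      - fwd_kernel a y x * (((sqrt a *\<^sub>R x - y) \<bullet> h) / (1 - a))) \<partial>lborel)"
    unfolding Zf_def lin_part(2)[symmetric, of y h] using int_x0[of "y+h"] int_x0[of y] lin_part(1)[of y h]
    by (simp add: right_diff_distrib mult.assoc)
  also have "\<bar>\<dots>\<bar> \<le> (\<integral>x. q0 x * C \<partial>lborel)"
  proof (rule integral_abs_bound_integral)
    show "integrable lborel (\<lambda>x. q0 x * C)" using q0_int by simp
    show "integrable lborel (\<lambda>x. q0 x * (fwd_kernel a (y + h) x - fwd_kernel a y x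
      - fwd_kernel a y x * (((sqrt a *\<^sub>R x - y) \<bullet> h) / (1 - a))))"
      using int_x0[of "y+h"] int_x0[of y] lin_part(1)[of y h]
      by (simp add: right_diff_distrib mult.assoc)
    fix x :: "real^'n"
    show "\<bar>q0 x * (fwd_kernel a (y + h) x - fwd_kernel a y x
      - fwd_kernel a y x * (((sqrt a *\<^sub>R x - y) \<bullet> h) / (1 - a)))\<bar> \<le> q0 x * C"
      unfolding abs_mult abs_of_nonneg[OF q0_nn] C_def Kc_def
      using kernel_taylor[OF a0 a1, of y h x] q0_nn[of x] by (intro mult_left_mono) auto
  qed
  also have "(\<integral>x. q0 x * C \<partial>lborel) = C" using q0_one by simp
  finally show ?thesis by (simp add: C_def)
qed

lemma Z_deriv: "(Zf has_derivative (\<lambda>h. Dv y \<bullet> h)) (at y)"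
  unfolding has_derivative_at'
proof (intro conjI allI impI)
  show "bounded_linear (\<lambda>h. Dv y \<bullet> h)" by (rule bounded_linear_inner_right)
  fix e :: real assume e: "0 < e"
  define C where "C = Kc * 2 / (1 - a)"
  have C: "0 < C" using Kc_pos b_pos by (simp add: C_def)
  show "\<exists>d>0. \<forall>x'. 0 < norm (x' - y) \<and> norm (x' - y) < d \<longrightarrow>
      norm (Zf x' - Zf y - Dv y \<bullet> (x' - y)) / norm (x' - y) < e"
  proof (intro exI[of _ "e / C"] conjI allI impI)
    show "0 < e / C" using e C by simp
    fix x' assume x': "0 < norm (x' - y) \<and> norm (x' - y) < e / C"
    have "\<bar>Zf x' - Zf y - Dv y \<bullet> (x' - y)\<bar> \<le> C * (norm (x' - y))\<^sup>2"
      using Z_taylor[of y "x' - y"] by (simp add: C_def)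
    then have "norm (Zf x' - Zf y - Dv y \<bullet> (x' - y)) / norm (x' - y) \<le> C * norm (x' - y)"
      using x' by (simp add: divide_le_eq power2_eq_square mult_ac)
    also have "\<dots> < e" using x' C by (simp add: field_simps)
    finally show "norm (Zf x' - Zf y - Dv y \<bullet> (x' - y)) / norm (x' - y) < e" .
  qed
qed

lemma score_eq: "score q0 a y $ j = (sqrt a * Mf y j - y$j * Zf y) / ((1 - a) * Zf y)"
proof -
  have mz: "marg q0 a = Zf" by (simp add: fun_eq_iff marg_eq)
  have "((\<lambda>x. ln (Zf x)) has_derivative (\<lambda>h. (Dv y \<bullet> h) * inverse (Zf y))) (at y)"
    by (rule has_derivative_ln[OF Z_pos Z_deriv])
  then have "frechet_derivative (\<lambda>x. ln (Zf x)) (at y) = (\<lambda>h. (Dv y \<bullet> h) * inverse (Zf y))"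
    by (rule frechet_derivative_at[symmetric])
  then show ?thesis
    unfolding score_def grad_def mz
    by (simp add: Dv_def inner_axis divide_inverse mult_ac)
qed

definition Im :: "'n \<Rightarrow> 'n \<Rightarrow> real" where "Im i j = (\<integral>y. Mf y i * Mf y j / Zf y \<partial>lborel)"

lemma Qm_sym: "Qm j i = Qm i j" by (simp add: Qm_def mult.commute)

lemma part1_lhs: "dexp (marg q0 a) (\<lambda>y. dcov (post q0 a y) i j) = Qm i j - Im i j"
proof -
  have "dexp (marg q0 a) (\<lambda>y. dcov (post q0 a y) i j) = (\<integral>y. Sf y i j - Mf y i * Mf y j / Zf y \<partial>lborel)"
    unfolding dexp_def marg_eq dcov_post
  proof (rule Bochner_Integration.integral_cong[OF refl])
    fix y :: "real^'n"
    have Z0: "Zf y \<noteq> 0" using Z_pos[of y] by simp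
    show "Zf y * (Sf y i j / Zf y - Mf y i * Mf y j / (Zf y)\<^sup>2) = Sf y i j - Mf y i * Mf y j / Zf y"
      using Z0 by (simp add: field_simps power2_eq_square)
  qed
  also have "\<dots> = Qm i j - Im i j"
    using F2[of i j] MMZ_int[of i j] by (simp add: Im_def)
  finally show ?thesis .
qed

lemma part1_E: "dexp (marg q0 a) (\<lambda>y. score q0 a y $ i * score q0 a y $ j)
   = (a * Im i j - a * Qm i j + (if i = j then 1 - a else 0)) / (1 - a)\<^sup>2"
proof -
  have sa: "sqrt a * sqrt a = a" using a0 by simp
  have b0: "1 - a \<noteq> 0" using a1 by simp
  have "dexp (marg q0 a) (\<lambda>y. score q0 a y $ i * score q0 a y $ j)
     = (\<integral>y. (a * (Mf y i * Mf y j / Zf y) - sqrt a * (y$j * Mf y i) - sqrt a * (y$i * Mf y j)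
            + y$i * y$j * Zf y) / (1 - a)\<^sup>2 \<partial>lborel)"
    unfolding dexp_def marg_eq score_eq
  proof (rule Bochner_Integration.integral_cong[OF refl])
    fix y :: "real^'n"
    have Z0: "Zf y \<noteq> 0" using Z_pos[of y] by simp
    show "Zf y * ((sqrt a * Mf y i - y $ i * Zf y) / ((1 - a) * Zf y) * ((sqrt a * Mf y j - y $ j * Zf y) / ((1 - a) * Zf y))) =
       (a * (Mf y i * Mf y j / Zf y) - sqrt a * (y $ j * Mf y i) - sqrt a * (y $ i * Mf y j) + y $ i * y $ j * Zf y) / (1 - a)\<^sup>2"
    proof -
      have g: "\<And>Z c A B :: real. Z \<noteq> 0 \<Longrightarrow> c \<noteq> 0 \<Longrightarrow> Z * (A / (c * Z) * (B / (c * Z))) = (A * B / Z) / c\<^sup>2"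
        by (simp add: field_simps power2_eq_square)
      have h: "(sqrt a * Mf y i - y $ i * Zf y) * (sqrt a * Mf y j - y $ j * Zf y) / Zf y
          = a * (Mf y i * Mf y j / Zf y) - sqrt a * (y $ j * Mf y i) - sqrt a * (y $ i * Mf y j) + y $ i * y $ j * Zf y"
        using Z0 sa by (simp add: field_simps power2_eq_square)
      show ?thesis unfolding g[OF Z0 b0] h ..
    qed
  qed
  also have "\<dots> = (a * Im i j - sqrt a * (sqrt a * Qm i j) - sqrt a * (sqrt a * Qm j i)
            + (a * Qm i j + (if i = j then 1 - a else 0))) / (1 - a)\<^sup>2"
  proof -
    define g1 where "g1 = (\<lambda>y. Mf y i * Mf y j / Zf y)"
    define g2 where "g2 = (\<lambda>y::real^'n. y$j * Mf y i)"
    define g3 where "g3 = (\<lambda>y::real^'n. y$i * Mf y j)"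
    define g4 where "g4 = (\<lambda>y::real^'n. y$i * y$j * Zf y)"
    have i1: "integrable lborel g1" and i2: "integrable lborel g2" and i3: "integrable lborel g3"
      and i4: "integrable lborel g4"
      using MMZ_int[of i j] F3(1)[of j i] F3(1)[of i j] F4(1)[of i j] by (simp_all add: g1_def g2_def g3_def g4_def)
    have v: "integral\<^sup>L lborel g1 = Im i j" "integral\<^sup>L lborel g2 = sqrt a * Qm i j"
      "integral\<^sup>L lborel g3 = sqrt a * Qm j i" "integral\<^sup>L lborel g4 = a * Qm i j + (if i = j then 1 - a else 0)"
      using F3(2)[of j i] F3(2)[of i j] F4(2)[of i j] by (simp_all add: g1_def g2_def g3_def g4_def Im_def)
    have "(\<integral>y. (a * g1 y - sqrt a * g2 y - sqrt a * g3 y + g4 y) / (1 - a)\<^sup>2 \<partial>lborel)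
       = (a * Im i j - sqrt a * (sqrt a * Qm i j) - sqrt a * (sqrt a * Qm j i)
            + (a * Qm i j + (if i = j then 1 - a else 0))) / (1 - a)\<^sup>2"
      using i1 i2 i3 i4 by (simp add: v[symmetric])
    then show ?thesis by (simp add: g1_def g2_def g3_def g4_def)
  qed
  also have "\<dots> = (a * Im i j - a * Qm i j + (if i = j then 1 - a else 0)) / (1 - a)\<^sup>2"
    by (simp only: Qm_sym mult.assoc[symmetric] sa) (simp add: algebra_simps)
  finally show ?thesis .
qed

lemma part1: "dexp (marg q0 a) (\<lambda>y. dcov (post q0 a y) i j)
      = (1 - a) / a * ((if i = j then 1 else 0)
          - (1 - a) * dexp (marg q0 a) (\<lambda>y. score q0 a y $ i * score q0 a y $ j))"
proof -
  have alg: "\<And>a b Q I d :: real. a \<noteq> 0 \<Longrightarrow> b \<noteq> 0 \<Longrightarrow> Q - I = b / a * (d - b * ((a * I - a * Q + b * d) / b\<^sup>2))"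
    by (simp add: field_simps power2_eq_square)
  have e: "(if i = j then 1 - a else 0) = (1 - a) * (if i = j then 1 else (0::real))" by simp
  show ?thesis
    unfolding part1_lhs part1_E e by (rule alg) (use a0 a1 in auto)
qed

lemma q0_vec_int: "integrable lborel (\<lambda>x. q0 x *\<^sub>R (x::real^'n))"
proof (rule Bochner_Integration.integrable_bound[OF q0_dom1])
  show "(\<lambda>x. q0 x *\<^sub>R (x::real^'n)) \<in> borel_measurable lborel" by measurable
  show "AE x in lborel. norm (q0 x *\<^sub>R x) \<le> norm (q0 x * (1 + (norm x)\<^sup>2))"
  proof (rule AE_I2)
    fix x :: "real^'n"
    show "norm (q0 x *\<^sub>R x) \<le> norm (q0 x * (1 + (norm x)\<^sup>2))"
      using q0_nn[of x] le_1_sq[of "norm x"] by (simp add: abs_mult mult_left_mono)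
  qed
qed

lemma dmean_q0: "dmean q0 $ i = mu i"
  unfolding dmean_def mu_def
  by (subst integral_bounded_linear[OF bounded_linear_vec_nth q0_vec_int, symmetric]) simp

lemma dcov_q0: "dcov q0 i j = Qm i j - mu i * mu j"
proof -
  have e: "(\<lambda>x. q0 x * ((x$i - dmean q0 $ i) * (x$j - dmean q0 $ j)))
    = (\<lambda>x. q0 x * (x$i * x$j) - mu j * (q0 x * x$i) - mu i * (q0 x * x$j) + (mu i * mu j) * q0 x)"
    by (simp add: fun_eq_iff dmean_q0 algebra_simps)
  show ?thesis
    unfolding dcov_def e using q2[of i j] q1[of i] q1[of j] q0_int q0_one
    by (simp add: Qm_def mu_def[symmetric])
qed

lemma dexpv_m: "dexpv (marg q0 a) (\<lambda>y. dmean (post q0 a y)) $ i = mu i"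
proof -
  have e: "(\<lambda>y. marg q0 a y *\<^sub>R dmean (post q0 a y)) = (\<lambda>y. \<Sum>l\<in>UNIV. Mf y l *\<^sub>R axis l 1)"
  proof
    fix y :: "real^'n"
    have Z0: "Zf y \<noteq> 0" using Z_pos[of y] by simp
    show "marg q0 a y *\<^sub>R dmean (post q0 a y) = (\<Sum>l\<in>UNIV. Mf y l *\<^sub>R axis l 1)"
      by (simp add: vec_eq_iff marg_eq dmean_post Z0 sum_component axis_def if_distrib cong: if_cong)
  qed
  have int: "integrable lborel (\<lambda>y. \<Sum>l\<in>UNIV. Mf y l *\<^sub>R (axis l 1 :: real^'n))"
    using F1(1) by (intro Bochner_Integration.integrable_sum integrable_scaleR_left) auto
  have "dexpv (marg q0 a) (\<lambda>y. dmean (post q0 a y)) $ i = (\<integral>y. (\<Sum>l\<in>UNIV. Mf y l *\<^sub>R (axis l 1 :: real^'n)) $ i \<partial>lborel)"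
    unfolding dexpv_def e by (rule integral_bounded_linear[OF bounded_linear_vec_nth int, symmetric])
  also have "\<dots> = (\<integral>y. Mf y i \<partial>lborel)"
    by (simp add: sum_component axis_def if_distrib cong: if_cong)
  also have "\<dots> = mu i" by (rule F1(2))
  finally show ?thesis .
qed

lemma dcov_fun_m: "dcov_fun (marg q0 a) (\<lambda>y. dmean (post q0 a y)) i j = Im i j - mu i * mu j"
proof -
  have "dcov_fun (marg q0 a) (\<lambda>y. dmean (post q0 a y)) i j
     = (\<integral>y. Mf y i * Mf y j / Zf y - mu j * Mf y i - mu i * Mf y j + (mu i * mu j) * Zf y \<partial>lborel)"
    unfolding dcov_fun_def dexpv_m
  proof (rule Bochner_Integration.integral_cong[OF refl])
    fix y :: "real^'n"
    have Z0: "Zf y \<noteq> 0" using Z_pos[of y] by simp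
    show "marg q0 a y * ((dmean (post q0 a y) $ i - mu i) * (dmean (post q0 a y) $ j - mu j)) =
        Mf y i * Mf y j / Zf y - mu j * Mf y i - mu i * Mf y j + mu i * mu j * Zf y"
      using Z0 by (simp add: marg_eq dmean_post field_simps)
  qed
  also have "\<dots> = Im i j - mu i * mu j"
    using MMZ_int[of i j] F1[of i] F1[of j] F0 by (simp add: Im_def)
  finally show ?thesis .
qed

lemma part2: "dcov q0 i j = dexp (marg q0 a) (\<lambda>y. dcov (post q0 a y) i j)
        + dcov_fun (marg q0 a) (\<lambda>y. dmean (post q0 a y)) i j"
  unfolding dcov_q0 part1_lhs dcov_fun_m by simp

end

theorem proposition1:
  fixes q0 :: "real^'n \<Rightarrow> real" and abar :: real
  assumes "prob_density_2 q0"
    and "0 < abar" and "abar < 1"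
  defines "bbar \<equiv> 1 - abar"
  shows "(\<forall>i j.
      dexp (marg q0 abar) (\<lambda>xn. dcov (post q0 abar xn) i j)
      = bbar / abar * ((if i = j then 1 else 0)
          - bbar * dexp (marg q0 abar) (\<lambda>xn. score q0 abar xn $ i * score q0 abar xn $ j)))
    \<and> (\<forall>i j.
      dcov q0 i j
      = dexp (marg q0 abar) (\<lambda>xn. dcov (post q0 abar xn) i j)
        + dcov_fun (marg q0 abar) (\<lambda>xn. dmean (post q0 abar xn)) i j)"
proof -
  interpret setting q0 abar using assms by unfold_locales
  show ?thesis unfolding bbar_def using part1 part2 by blast
qed

end
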